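(* Let $n\ge 2$, $a\ge\sqrt{n-1}$, $f(x)=a|x^{(1)}|+\sum_{i=2}^n x^{(i)}$ on $\mathbb{R}^n$, and $0<c_1<c_2<1$. Let $x_0\in\mathbb{R}^n$ with $x_0^{(1)}\ne0$ and define $x_{k+1}=x_k+t_kd_k$ with $d_k=-\nabla f(x_k)$, where $A(t_k)$ and $W(t_k)$ hold for all $k\ge0$. Let $\tau=c_1+\frac{(n-1)(c_1-1)}{a^2}$. If $\tau>0$, then $f(x_k)$ is bounded below as $k\to\infty$.
   Context: $x^{(i)}$ is the $i$-th coordinate. At iteration $k$, the Armijo condition is $A(t)$: $f(x_k+td_k)\le f(x_k)+c_1t\nabla f(x_k)^Td_k$; the Wolfe condition is $W(t)$: $f$ is differentiable at $x_k+td_k$ and $\nabla f(x_k+td_k)^Td_k\ge c_2\nabla f(x_k)^Td_k$. *)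

theory Defs
  imports "HOL-Analysis.Analysis"
begin

definition grad :: "('a::real_inner \<Rightarrow> real) \<Rightarrow> 'a \<Rightarrow> 'a" where
  "grad f x = (THE D. GDERIV f x :> D)"

definition fcor :: "real \<Rightarrow> 'n::finite \<Rightarrow> real ^ 'n \<Rightarrow> real" where
  "fcor a i1 x = a * \<bar>x $ i1\<bar> + (\<Sum>i\<in>UNIV - {i1}. x $ i)"

end

theory Submission imports Defs begin

definition gv :: "real \<Rightarrow> 'n::finite \<Rightarrow> real \<Rightarrow> real ^ 'n" where
  "gv a i1 s = (\<chi> i. if i = i1 then a * s else 1)"

lemma gv_inner: "gv a i1 s \<bullet> y = a * s * y $ i1 + (\<Sum>i\<in>UNIV - {i1}. y $ i)"
proof -
  have "gv a i1 s \<bullet> y = (\<Sum>i\<in>UNIV. gv a i1 s $ i * y $ i)" by (simp add: inner_vec_def)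
  also have "\<dots> = gv a i1 s $ i1 * y $ i1 + (\<Sum>i\<in>UNIV - {i1}. gv a i1 s $ i * y $ i)"
    by (rule sum.remove) auto
  also have "(\<Sum>i\<in>UNIV - {i1}. gv a i1 s $ i * y $ i) = (\<Sum>i\<in>UNIV - {i1}. y $ i)"
    by (rule sum.cong) (auto simp: gv_def)
  finally show ?thesis by (simp add: gv_def)
qed

lemma gv_gv: fixes i1 :: "'n::finite" shows "gv a i1 s \<bullet> gv a i1 s' = a\<^sup>2 * s * s' + (real CARD('n) - 1)"
proof -
  have "(\<Sum>i\<in>UNIV - {i1}. gv a i1 s' $ i) = (\<Sum>i\<in>UNIV - {i1::'n}. 1)"
    by (rule sum.cong) (auto simp: gv_def)
  also have "\<dots> = real CARD('n) - 1" by (simp add: card_Diff_singleton)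
  finally show ?thesis unfolding gv_inner[of a i1 s "gv a i1 s'"] by (simp add: gv_def power2_eq_square)
qed

lemma fcor_eq: "sgn (y $ i1) = s \<Longrightarrow> fcor a i1 y = gv a i1 s \<bullet> y"
  by (cases "y $ i1" "0::real" rule: linorder_cases) (auto simp: gv_inner fcor_def)

lemma grad_fcor:
  fixes x :: "real ^ 'n::finite"
  assumes "x $ i1 \<noteq> 0"
  shows "grad (fcor a i1) x = gv a i1 (sgn (x $ i1))"
proof -
  let ?g = "gv a i1 (sgn (x $ i1))"
  have lin: "((\<lambda>y. ?g \<bullet> y) has_derivative (\<lambda>h. h \<bullet> ?g)) (at x)"
    using bounded_linear.has_derivative[OF bounded_linear_inner_right[of ?g] has_derivative_ident[of "at x"]]
    by (simp add: inner_commute)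
  have "(fcor a i1 has_derivative (\<lambda>h. h \<bullet> ?g)) (at x)"
  proof (rule has_derivative_transform_within[OF lin, of "\<bar>x $ i1\<bar>"])
    show "0 < \<bar>x $ i1\<bar>" using assms by simp
    fix y assume "dist y x < \<bar>x $ i1\<bar>"
    moreover have "\<bar>y $ i1 - x $ i1\<bar> \<le> dist y x"
      using component_le_norm_cart[of "y - x" i1] by (simp add: dist_norm)
    ultimately have "sgn (y $ i1) = sgn (x $ i1)" by (auto simp: sgn_if)
    then show "?g \<bullet> y = fcor a i1 y" by (simp add: fcor_eq)
  qed auto
  then have D: "GDERIV (fcor a i1) x :> ?g" by (simp add: gderiv_def)
  show ?thesis unfolding grad_def
  proof (rule the_equality[where P="\<lambda>D. GDERIV (fcor a i1) x :> D", OF D])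
    fix D' assume "GDERIV (fcor a i1) x :> D'"
    then have "(\<lambda>h. h \<bullet> D') = (\<lambda>h. h \<bullet> ?g)"
      using has_derivative_unique D by (auto simp: gderiv_def)
    then have "\<And>h. h \<bullet> (D' - ?g) = 0" by (metis inner_diff_right right_minus_eq)
    then show "D' = ?g" by (metis inner_eq_zero_iff right_minus_eq)
  qed
qed

lemma nondiff:
  fixes x :: "real ^ 'n::finite"
  assumes "fcor a i1 differentiable (at x)" "a > 0"
  shows "x $ i1 \<noteq> 0"
proof
  assume x0: "x $ i1 = 0"
  define e :: "real ^ 'n" where "e = axis i1 1"
  let ?C = "\<Sum>i\<in>UNIV - {i1}. x $ i"
  have "(\<lambda>s. x + s *\<^sub>R e) differentiable (at 0)"
    by (intro derivative_intros)
  then have "(fcor a i1 \<circ> (\<lambda>s. x + s *\<^sub>R e)) differentiable (at 0)"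
    using differentiable_chain_at assms(1) by fastforce
  moreover have "fcor a i1 \<circ> (\<lambda>s. x + s *\<^sub>R e) = (\<lambda>s. a * \<bar>s\<bar> + ?C)"
    using x0 by (auto simp: fcor_def e_def axis_def intro!: sum.cong)
  ultimately obtain D where D: "((\<lambda>s. a * \<bar>s\<bar> + ?C) has_real_derivative D) (at 0)"
    by (auto simp: real_differentiable_def)
  have D2: "((\<lambda>s. (a * \<bar>s\<bar> + ?C) - a * s) has_real_derivative D - a * 1) (at 0)"
    by (rule DERIV_diff[OF D DERIV_cmult[OF DERIV_ident]])
  have "D = 0" using D
    by (rule DERIV_local_min[of _ _ _ 1]) (use assms(2) in auto)
  moreover have "D - a * 1 = 0" using D2
  proof (rule DERIV_local_min[of _ _ _ 1])
    show "\<forall>y. \<bar>0 - y\<bar> < 1 \<longrightarrow> a * \<bar>0\<bar> + ?C - a * 0 \<le> a * \<bar>y\<bar> + ?C - a * y"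
      using assms(2) by (auto simp: abs_if)
  qed auto
  ultimately show False using assms(2) by simp
qed

lemma real_part:
  fixes u F t :: "nat \<Rightarrow> real" and a m c1 :: real
  assumes uS: "\<And>k. u (Suc k) = t k * a - u k" and upos: "\<And>k. u k > 0"
    and FS: "\<And>k. F (Suc k) = F k - 2 * a * u k + t k * (a\<^sup>2 - m)"
    and FA: "\<And>k. F (Suc k) \<le> F k - c1 * t k * (a\<^sup>2 + m)"
    and a: "a > 0" and am: "a\<^sup>2 \<ge> m" and Dpos: "a\<^sup>2 * c1 + m * (c1 - 1) > 0"
  shows "\<exists>B. \<forall>k. B \<le> F k"
proof -
  define D where "D = a\<^sup>2 * c1 + m * (c1 - 1)"
  define \<beta> where "\<beta> = a\<^sup>2 + D"
  define P where "P k = D * F k - a * \<beta> * u k" for k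
  have D0: "D > 0" using Dpos D_def by simp
  have step: "P k \<le> P (Suc k)" for k
  proof -
    have tb: "t k * \<beta> \<le> 2 * a * u k"
      using FS[of k] FA[of k] unfolding \<beta>_def D_def by (simp add: algebra_simps)
    have "t k * a > 0" using uS[of k] upos[of k] upos[of "Suc k"] by linarith
    then have t0: "t k \<ge> 0" using a by (simp add: zero_less_mult_iff)
    have "t k * (a\<^sup>2 - m) \<ge> 0" using t0 am by simp
    then have f1: "D * (F (Suc k) - F k) \<ge> D * (- 2 * a * u k)"
      using FS[of k] D0 by (intro mult_left_mono) auto
    have "a\<^sup>2 * (t k * \<beta>) \<le> a\<^sup>2 * (2 * a * u k)" using tb by (intro mult_left_mono) auto
    moreover have "a * \<beta> * (u k - u (Suc k)) = 2*a*\<beta>*u k - a\<^sup>2 * (t k * \<beta>)"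
      by (simp add: uS algebra_simps power2_eq_square)
    moreover have "2*a*\<beta>*u k - a\<^sup>2 * (2 * a * u k) = 2 * a * u k * D"
      by (simp add: \<beta>_def algebra_simps power2_eq_square)
    ultimately have f2: "a * \<beta> * (u k - u (Suc k)) \<ge> 2 * a * u k * D"
      by linarith
    show ?thesis using f1 f2 unfolding P_def by (simp add: algebra_simps)
  qed
  have "P 0 \<le> P k" for k
    by (induction k) (auto intro: order_trans step)
  moreover have "a * \<beta> * u k \<ge> 0" for k using a upos[of k] D0 unfolding \<beta>_def by simp
  ultimately have "P 0 / D \<le> F k" for k
    using D0 unfolding P_def by (simp add: pos_divide_le_eq) (smt (verit) mult.commute)
  then show ?thesis by blast
qed

theorem corollary1:
  fixes a c1 c2 :: real and i1 :: "'n::finite"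
    and x d :: "nat \<Rightarrow> real ^ 'n" and t :: "nat \<Rightarrow> real"
  assumes n2: "CARD('n) \<ge> 2"
    and a_ge: "a \<ge> sqrt (real CARD('n) - 1)"
    and c1: "0 < c1" and c12: "c1 < c2" and c2: "c2 < 1"
    and x0: "x 0 $ i1 \<noteq> 0"
    and dk: "\<And>k. d k = - grad (fcor a i1) (x k)"
    and xk: "\<And>k. x (Suc k) = x k + t k *\<^sub>R d k"
    and armijo: "\<And>k. fcor a i1 (x k + t k *\<^sub>R d k)
                   \<le> fcor a i1 (x k) + c1 * t k * (grad (fcor a i1) (x k) \<bullet> d k)"
    and wolfe: "\<And>k. fcor a i1 differentiable (at (x k + t k *\<^sub>R d k)) \<and>
                   grad (fcor a i1) (x k + t k *\<^sub>R d k) \<bullet> d k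
                   \<ge> c2 * (grad (fcor a i1) (x k) \<bullet> d k)"
    and tau: "c1 + (real CARD('n) - 1) * (c1 - 1) / a\<^sup>2 > 0"
  shows "\<exists>B. \<forall>k. B \<le> fcor a i1 (x k)"
proof -
  define m where "m = real CARD('n) - 1"
  have m1: "m \<ge> 1" using n2 m_def by simp
  have "sqrt m \<ge> 1" using m1 by simp
  then have a1: "a \<ge> 1" using a_ge unfolding m_def by linarith
  have am: "a\<^sup>2 \<ge> m"
  proof -
    have "(sqrt m)\<^sup>2 \<le> a\<^sup>2" using a_ge m_def by (intro power_mono) auto
    then show ?thesis using m1 by simp
  qed
  have Dpos: "a\<^sup>2 * c1 + m * (c1 - 1) > 0"
  proof -
    have "a\<^sup>2 > 0" using a1 by simp
    then have "a\<^sup>2 * (c1 + m * (c1 - 1) / a\<^sup>2) > 0" using tau m_def by simp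
    also have "a\<^sup>2 * (c1 + m * (c1 - 1) / a\<^sup>2) = a\<^sup>2 * c1 + m * (c1 - 1)"
      using \<open>a\<^sup>2 > 0\<close> by (simp add: distrib_left)
    finally show ?thesis .
  qed
  have nz: "x k $ i1 \<noteq> 0" for k
  proof (cases k)
    case 0 then show ?thesis using x0 by simp
  next
    case (Suc j)
    then show ?thesis using nondiff[of a i1 "x (Suc j)"] wolfe[of j] xk[of j] a1 by simp
  qed
  define s where "s k = sgn (x k $ i1)" for k
  define u where "u k = \<bar>x k $ i1\<bar>" for k
  define F where "F k = fcor a i1 (x k)" for k
  have s1: "s k * s k = 1" for k using nz[of k] by (simp add: s_def sgn_if)
  have gr: "grad (fcor a i1) (x k) = gv a i1 (s k)" for k unfolding s_def by (rule grad_fcor[OF nz])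
  have xS: "x (Suc k) = x k - t k *\<^sub>R gv a i1 (s k)" for k using xk[of k] dk[of k] gr[of k] by simp
  have flip: "s (Suc k) = - s k" for k
  proof (rule ccontr)
    assume ne: "s (Suc k) \<noteq> - s k"
    have "s k = 1 \<or> s k = -1" "s (Suc k) = 1 \<or> s (Suc k) = -1"
      using nz by (auto simp: s_def sgn_if)
    with ne have eq: "s (Suc k) = s k" by auto
    have "gv a i1 (s (Suc k)) \<bullet> (- gv a i1 (s k)) \<ge> c2 * (gv a i1 (s k) \<bullet> (- gv a i1 (s k)))"
      using wolfe[of k] xk[of k] dk[of k] gr[of k] gr[of "Suc k"] by simp
    moreover have "a\<^sup>2 * s k * s k = a\<^sup>2" using s1[of k] by (simp add: mult.assoc)
    ultimately have "- (a\<^sup>2 + m) \<ge> c2 * (- (a\<^sup>2 + m))"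
      using eq by (simp add: gv_gv m_def)
    then have "a\<^sup>2 + m \<le> c2 * (a\<^sup>2 + m)" by (simp add: algebra_simps)
    moreover have "a\<^sup>2 + m > 0" using m1 by (simp add: add_nonneg_pos)
    ultimately show False using c2 by (simp add: mult_le_cancel_right1)
  qed
  have us: "u k = s k * x k $ i1" for k by (simp add: u_def s_def abs_sgn mult.commute)
  have Fk: "F k = a * u k + (\<Sum>i\<in>UNIV - {i1}. x k $ i)" for k
    by (simp add: F_def fcor_def u_def)
  have gg: "gv a i1 (s (Suc k)) \<bullet> gv a i1 (s k) = - a\<^sup>2 + m" for k
    using flip[of k] s1[of k] by (simp add: gv_gv m_def)
  have uS: "u (Suc k) = t k * a - u k" for k
  proof -
    have "u (Suc k) = s (Suc k) * (x k $ i1 - t k * (a * s k))"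
      using us[of "Suc k"] xS[of k] by (simp add: gv_def)
    then show ?thesis using flip[of k] s1[of k] us[of k] by (simp add: algebra_simps)
  qed
  have upos: "u k > 0" for k using nz u_def by simp
  have FS: "F (Suc k) = F k - 2 * a * u k + t k * (a\<^sup>2 - m)" for k
  proof -
    have "F (Suc k) = gv a i1 (s (Suc k)) \<bullet> x (Suc k)"
      unfolding F_def by (rule fcor_eq) (simp add: s_def)
    also have "\<dots> = gv a i1 (s (Suc k)) \<bullet> x k - t k * (- a\<^sup>2 + m)"
      using xS[of k] gg[of k] by (simp add: inner_diff_right)
    also have "gv a i1 (s (Suc k)) \<bullet> x k = - a * u k + (\<Sum>i\<in>UNIV - {i1}. x k $ i)"
      using flip[of k] us[of k] by (simp add: gv_inner)
    finally show ?thesis using Fk[of k] by (simp add: algebra_simps)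
  qed
  have FA: "F (Suc k) \<le> F k - c1 * t k * (a\<^sup>2 + m)" for k
  proof -
    have "gv a i1 (s k) \<bullet> gv a i1 (s k) = a\<^sup>2 + m"
      using s1[of k] by (simp add: gv_gv m_def)
    moreover have "F (Suc k) \<le> F k + c1 * t k * (gv a i1 (s k) \<bullet> (- gv a i1 (s k)))"
      using armijo[of k] unfolding F_def xk[of k] dk[of k] gr[of k] .
    ultimately show ?thesis by (simp add: algebra_simps)
  qed
  show ?thesis
    using real_part[of u t a F m c1, OF uS upos FS FA _ am Dpos] a1 unfolding F_def by simp
qed

end
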